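(* Let $\mathcal{B}$ be a unital complex algebra, $n_0\in\mathbb{N}$, $\mathcal{A}=\mathrm{Mat}_{n_0}(\mathcal{B})$ and let $(\Omega,\mathrm{d},\bar{\mathrm{d}})$ be a bidifferential graded algebra with $\Omega=\mathcal{A}\otimes\bigwedge(\mathbb{C}^2)$, where $\mathrm{d},\bar{\mathrm{d}}$ respect matrix sizes. Fix $n,n',m,m'\ge n_0$. Let $\mathbf{X}\in\mathrm{Mat}(n,n,\mathcal{B})$ and $\mathbf{Y}\in\mathrm{Mat}(n',n,\mathcal{B})$ satisfy $$\bar{\mathrm{d}}\mathbf{X}=(\mathrm{d}\mathbf{X})\,\mathbf{P},\qquad \bar{\mathrm{d}}\mathbf{Y}=(\mathrm{d}\mathbf{Y})\,\mathbf{P},\qquad \mathbf{R}\mathbf{X}-\mathbf{X}\mathbf{P}=-\mathbf{Q}\mathbf{Y},$$ where $\mathbf{P},\mathbf{R}\in\mathrm{Mat}(n,n,\mathcal{B})$ are $\mathrm{d}$- and $\bar{\mathrm{d}}$-constant and $\mathbf{Q}=\tilde{\mathbf{V}}\,Q\,\tilde{\mathbf{U}}$ with $\mathrm{d}$- and $\bar{\mathrm{d}}$-constant matrices $\tilde{\mathbf{U}}\in\mathrm{Mat}(m',n',\mathcal{B})$, $\tilde{\mathbf{V}}\in\mathrm{Mat}(n,m,\mathcal{B})$, $Q\in\mathrm{Mat}(m,m',\mathcal{B})$. If $\mathbf{X}$ is invertible, then $\phi:=\tilde{\mathbf{U}}\mathbf{Y}\mathbf{X}^{-1}\tilde{\mathbf{V}}\in\mathrm{Mat}(m',m,\mathcal{B})$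 satisfies $$\bar{\mathrm{d}}\phi=(\mathrm{d}\phi)\,Q\,\phi+\mathrm{d}\theta\qquad\text{with}\qquad \theta=\tilde{\mathbf{U}}\mathbf{Y}\mathbf{X}^{-1}\mathbf{R}\tilde{\mathbf{V}},$$ and consequently $\bar{\mathrm{d}}\mathrm{d}\phi=\mathrm{d}\phi\,Q\,\mathrm{d}\phi$.
   Context: A complex graded algebra is an associative algebra $\Omega=\bigoplus_{r\ge0}\Omega^r$ (direct sum of complex vector spaces) with $\Omega^r\Omega^s\subseteq\Omega^{r+s}$; $\Omega^0$ is a subalgebra and each $\Omega^r$ an $\Omega^0$-bimodule. A bidifferential graded algebra is a graded algebra with two linear maps $\mathrm{d},\bar{\mathrm{d}}:\Omega\to\Omega$ of degree one satisfying $\mathrm{d}^2=0$, $\bar{\mathrm{d}}^2=0$, $\mathrm{d}\bar{\mathrm{d}}+\bar{\mathrm{d}}\mathrm{d}=0$ and the graded Leibniz rule $\mathrm{d}(\chi\chi')=(\mathrm{d}\chi)\chi'+(-1)^r\chi\,\mathrm{d}\chi'$ (same for $\bar{\mathrm{d}}$) for $\chi\in\Omega^r$. $\mathrm{Mat}_{n_0}(\mathcal{B}):=\bigoplus_{n',n\ge n_0}\mathrm{Mat}(n',n,\mathcal{B})$ with the usual matrix product, extended by $AB=0$ whenever sizes do not match. $\Omega=\mathcal{A}\otimes\bigwedge(\mathbb{C}^2)$, elements of $\bigwedge(\mathbb{C}^2)$ are treated as constants; "$\mathrm{d},\bar{\mathrm{d}}$ respect matrix sizes" means they map $\mathrm{Mat}(n',n,\mathcal{B})\otimes\bigwedge(\mathbb{C}^2)$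 into itself. An element is $\mathrm{d}$- and $\bar{\mathrm{d}}$-constant if it is annihilated by both $\mathrm{d}$ and $\bar{\mathrm{d}}$. *)

theory Defs
  imports Complex_Main
begin

text \<open>Matrices over B are modelled as entry functions; an element of
  Omega = Mat_n0(B) (x) Lambda(C^2) is modelled as a function assigning to each
  block size (r,c) and each wedge monomial S (a subset of {0,1}, standing for
  xi_S in Lambda(C^2)) an r x c matrix (entries outside the block are 0).\<close>

type_synonym 'b mat = "nat \<Rightarrow> nat \<Rightarrow> 'b"
type_synonym 'b om = "nat \<Rightarrow> nat \<Rightarrow> nat set \<Rightarrow> 'b mat"

definition complex_algebra :: "(complex \<Rightarrow> 'b::ring_1 \<Rightarrow> 'b) \<Rightarrow> bool" where
  "complex_algebra sc \<longleftrightarrow>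
     (\<forall>a b x. sc (a + b) x = sc a x + sc b x) \<and>
     (\<forall>a x y. sc a (x + y) = sc a x + sc a y) \<and>
     (\<forall>a b x. sc (a * b) x = sc a (sc b x)) \<and>
     (\<forall>x. sc 1 x = x) \<and>
     (\<forall>a x y. sc a (x * y) = sc a x * y) \<and>
     (\<forall>a x y. sc a (x * y) = x * sc a y)"

definition mzero :: "'b::zero mat" where
  "mzero = (\<lambda>i j. 0)"

definition om_zero :: "'b::zero om" where
  "om_zero = (\<lambda>r c S. mzero)"

definition om_wf :: "nat \<Rightarrow> 'b::zero om \<Rightarrow> bool" where
  "om_wf n0 w \<longleftrightarrow>
     finite {(r, c, S). w r c S \<noteq> mzero} \<and>
     (\<forall>r c S. w r c S \<noteq> mzero \<longrightarrow> n0 \<le> r \<and> n0 \<le> c \<and> S \<subseteq> {0, 1}) \<and>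
     (\<forall>r c S i j. r \<le> i \<or> c \<le> j \<longrightarrow> w r c S i j = 0)"

text \<open>Sign of xi_T xi_U = wsign T U * xi_(T union U) for disjoint T, U.\<close>
definition wsign :: "nat set \<Rightarrow> nat set \<Rightarrow> 'b::ring_1" where
  "wsign T U = (-1) ^ card {(t, u). t \<in> T \<and> u \<in> U \<and> u < t}"

definition om_add :: "'b::ring_1 om \<Rightarrow> 'b om \<Rightarrow> 'b om" where
  "om_add w v = (\<lambda>r c S i j. w r c S i j + v r c S i j)"

definition om_diff :: "'b::ring_1 om \<Rightarrow> 'b om \<Rightarrow> 'b om" where
  "om_diff w v = (\<lambda>r c S i j. w r c S i j - v r c S i j)"

definition om_uminus :: "'b::ring_1 om \<Rightarrow> 'b om" where
  "om_uminus w = (\<lambda>r c S i j. - w r c S i j)"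

definition om_scale :: "(complex \<Rightarrow> 'b::ring_1 \<Rightarrow> 'b) \<Rightarrow> complex \<Rightarrow> 'b om \<Rightarrow> 'b om" where
  "om_scale sc z w = (\<lambda>r c S i j. sc z (w r c S i j))"

text \<open>Product in Omega: block matrix product (zero for mismatching sizes)
  combined with the wedge product.\<close>
definition om_mult :: "'b::ring_1 om \<Rightarrow> 'b om \<Rightarrow> 'b om" where
  "om_mult w v = (\<lambda>r c S i j.
     \<Sum>k\<in>{k. \<exists>T. w r k T \<noteq> mzero}. \<Sum>T\<in>Pow S.
        wsign T (S - T) * (\<Sum>l<k. w r k T i l * v k c (S - T) l j))"

text \<open>Right multiplication by the constant wedge monomial xi_R.\<close>
definition om_rwedge :: "'b::ring_1 om \<Rightarrow> nat set \<Rightarrow> 'b om" where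
  "om_rwedge w R = (\<lambda>r c S. if R \<subseteq> S
       then (\<lambda>i j. wsign (S - R) R * w r c (S - R) i j) else mzero)"

definition om_hom :: "nat \<Rightarrow> 'b::zero om \<Rightarrow> bool" where
  "om_hom k w \<longleftrightarrow> (\<forall>r c S. w r c S \<noteq> mzero \<longrightarrow> card S = k)"

definition in_block :: "nat \<Rightarrow> nat \<Rightarrow> 'b::zero om \<Rightarrow> bool" where
  "in_block a b w \<longleftrightarrow> (\<forall>r c S. w r c S \<noteq> mzero \<longrightarrow> r = a \<and> c = b)"

definition blk :: "nat \<Rightarrow> nat \<Rightarrow> 'b::zero mat \<Rightarrow> 'b om" where
  "blk a b M = (\<lambda>r c S. if r = a \<and> c = b \<and> S = {}
       then (\<lambda>i j. if i < a \<and> j < b then M i j else 0) else mzero)"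

definition idm :: "'b::ring_1 mat" where
  "idm = (\<lambda>i j. if i = j then 1 else 0)"

text \<open>A degree-one, C-linear map d on Omega with d^2 = 0, the graded Leibniz
  rule, and elements of Lambda(C^2) treated as constants.\<close>
definition graded_differential ::
  "(complex \<Rightarrow> 'b::ring_1 \<Rightarrow> 'b) \<Rightarrow> nat \<Rightarrow> ('b om \<Rightarrow> 'b om) \<Rightarrow> bool" where
  "graded_differential sc n0 d \<longleftrightarrow>
     (\<forall>w. om_wf n0 w \<longrightarrow> om_wf n0 (d w)) \<and>
     (\<forall>w v. om_wf n0 w \<longrightarrow> om_wf n0 v \<longrightarrow> d (om_add w v) = om_add (d w) (d v)) \<and>
     (\<forall>z w. om_wf n0 w \<longrightarrow> d (om_scale sc z w) = om_scale sc z (d w)) \<and>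
     (\<forall>k w. om_wf n0 w \<longrightarrow> om_hom k w \<longrightarrow> om_hom (Suc k) (d w)) \<and>
     (\<forall>w. om_wf n0 w \<longrightarrow> d (d w) = om_zero) \<and>
     (\<forall>k w v. om_wf n0 w \<longrightarrow> om_wf n0 v \<longrightarrow> om_hom k w \<longrightarrow>
        d (om_mult w v) = om_add (om_mult (d w) v) (om_scale sc ((-1) ^ k) (om_mult w (d v)))) \<and>
     (\<forall>w R. om_wf n0 w \<longrightarrow> R \<subseteq> {0, 1} \<longrightarrow> d (om_rwedge w R) = om_rwedge (d w) R)"

definition bidifferential ::
  "(complex \<Rightarrow> 'b::ring_1 \<Rightarrow> 'b) \<Rightarrow> nat \<Rightarrow> ('b om \<Rightarrow> 'b om) \<Rightarrow> ('b om \<Rightarrow> 'b om) \<Rightarrow> bool" where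
  "bidifferential sc n0 d db \<longleftrightarrow>
     graded_differential sc n0 d \<and> graded_differential sc n0 db \<and>
     (\<forall>w. om_wf n0 w \<longrightarrow> om_add (d (db w)) (db (d w)) = om_zero)"

definition respects_sizes :: "nat \<Rightarrow> ('b::zero om \<Rightarrow> 'b om) \<Rightarrow> bool" where
  "respects_sizes n0 d \<longleftrightarrow>
     (\<forall>w a b. om_wf n0 w \<longrightarrow> in_block a b w \<longrightarrow> in_block a b (d w))"

end

theory Submission
  imports Defs
begin


definition good :: "nat \<Rightarrow> 'b::ring_1 om \<Rightarrow> bool" where
"good N w \<longleftrightarrow> (\<forall>r c S. w r c S \<noteq> mzero \<longrightarrow> r < N \<and> c < N) \<and>
   (\<forall>r c S i j. r \<le> i \<or> c \<le> j \<longrightarrow> w r c S i j = 0)"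

definition mm :: "(nat\<times>nat) set \<Rightarrow> (nat\<times>nat \<Rightarrow> nat\<times>nat \<Rightarrow> 'b::ring_1) \<Rightarrow> (nat\<times>nat \<Rightarrow> nat\<times>nat \<Rightarrow> 'b) \<Rightarrow> nat\<times>nat \<Rightarrow> nat\<times>nat \<Rightarrow> 'b" where
"mm I a b x y = (\<Sum>p\<in>I. a x p * b p y)"

definition blkf :: "'b om \<Rightarrow> nat set \<Rightarrow> nat\<times>nat \<Rightarrow> nat\<times>nat \<Rightarrow> 'b" where
"blkf w T = (\<lambda>(r,i) (k,l). w r k T i l)"

abbreviation sq :: "nat \<Rightarrow> (nat\<times>nat) set" where "sq N \<equiv> {..<N} \<times> {..<N}"

lemma good_mono: "good N w \<Longrightarrow> N \<le> M \<Longrightarrow> good M w"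
  unfolding good_def by (meson less_le_trans)

lemma mult_formula:
  assumes g: "good N w"
  shows "om_mult w v r c S i j = (\<Sum>T\<in>Pow S. wsign T (S - T) * mm (sq N) (blkf w T) (blkf v (S - T)) (r,i) (c,j))"
proof -
  have K: "{k. \<exists>T. w r k T \<noteq> mzero} \<subseteq> {..<N}" using g unfolding good_def by auto
  let ?f = "\<lambda>k. \<Sum>T\<in>Pow S. wsign T (S - T) * (\<Sum>l<k. w r k T i l * v k c (S - T) l j)"
  have 1: "(\<Sum>k\<in>{k. \<exists>T. w r k T \<noteq> mzero}. ?f k) = (\<Sum>k<N. ?f k)"
    by (rule sum.mono_neutral_left) (use K in \<open>auto simp: mzero_def\<close>)
  have 2: "(\<Sum>l<k. w r k T i l * v k c (S - T) l j) = (\<Sum>l<N. w r k T i l * v k c (S - T) l j)"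
    if "k < N" for k T
    by (rule sum.mono_neutral_left) (use that g in \<open>auto simp: good_def\<close>)
  have "om_mult w v r c S i j = (\<Sum>k<N. ?f k)" unfolding om_mult_def using 1 by simp
  also have "\<dots> = (\<Sum>k<N. \<Sum>T\<in>Pow S. wsign T (S - T) * (\<Sum>l<N. w r k T i l * v k c (S - T) l j))"
    using 2 by simp
  also have "\<dots> = (\<Sum>T\<in>Pow S. \<Sum>k<N. wsign T (S - T) * (\<Sum>l<N. w r k T i l * v k c (S - T) l j))"
    by (rule sum.swap)
  also have "\<dots> = (\<Sum>T\<in>Pow S. wsign T (S - T) * (\<Sum>k<N. \<Sum>l<N. w r k T i l * v k c (S - T) l j))"
    by (simp add: sum_distrib_left)
  also have "\<dots> = (\<Sum>T\<in>Pow S. wsign T (S - T) * mm (sq N) (blkf w T) (blkf v (S - T)) (r,i) (c,j))"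
    by (simp add: mm_def blkf_def sum.cartesian_product case_prod_beta)
  finally show ?thesis .
qed

lemma mm_assoc: "mm I (mm I a b) c x y = mm I a (mm I b c) x y"
proof -
  have "mm I (mm I a b) c x y = (\<Sum>p\<in>I. \<Sum>q\<in>I. a x q * b q p * c p y)"
    unfolding mm_def sum_distrib_right by simp
  also have "\<dots> = (\<Sum>q\<in>I. \<Sum>p\<in>I. a x q * b q p * c p y)" by (rule sum.swap)
  also have "\<dots> = mm I a (mm I b c) x y"
    unfolding mm_def sum_distrib_left by (simp add: mult.assoc)
  finally show ?thesis .
qed

lemma neg1_central: "((-1::'b::ring_1)^n) * x = x * (-1)^n"
proof (induction n)
  case (Suc n)
  have "(-1::'b)^Suc n * x = - ((-1)^n * x)" by simp
  also have "\<dots> = - (x * (-1)^n)" using Suc by simp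
  also have "\<dots> = x * (-1)^Suc n" by simp
  finally show ?case .
qed simp

lemma wsign_central: "wsign T U * (x::'b::ring_1) = x * wsign T U"
  unfolding wsign_def by (rule neg1_central)

lemma mm_sum_left: "mm I (\<lambda>x p. \<Sum>t\<in>X. f t * g t x p) b x y = (\<Sum>t\<in>X. f t * mm I (g t) b x y)"
proof -
  have "mm I (\<lambda>x p. \<Sum>t\<in>X. f t * g t x p) b x y = (\<Sum>p\<in>I. \<Sum>t\<in>X. f t * (g t x p * b p y))"
    unfolding mm_def sum_distrib_right by (simp add: mult.assoc)
  also have "\<dots> = (\<Sum>t\<in>X. \<Sum>p\<in>I. f t * (g t x p * b p y))" by (rule sum.swap)
  also have "\<dots> = (\<Sum>t\<in>X. f t * mm I (g t) b x y)"
    unfolding mm_def sum_distrib_left by simp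
  finally show ?thesis .
qed

lemma mm_sum_right: "mm I a (\<lambda>p y. \<Sum>t\<in>X. wsign (A t) (B t) * g t p y) x y = (\<Sum>t\<in>X. wsign (A t) (B t) * mm I a (g t) x y)"
proof -
  have e: "a x p * (wsign (A t) (B t) * g t p y) = wsign (A t) (B t) * (a x p * g t p y)" for p t
    by (metis mult.assoc wsign_central)
  show ?thesis unfolding mm_def sum_distrib_left e
    by (rule sum.swap)
qed


lemma mult_nz:
  assumes g: "good N w" and nz: "om_mult w v r c S i j \<noteq> 0"
  shows "finite S \<and> (\<exists>T k l. T \<subseteq> S \<and> k < N \<and> l < N \<and> w r k T i l \<noteq> 0 \<and> v k c (S - T) l j \<noteq> 0)"
proof -
  have fin: "finite S"
  proof (rule ccontr)
    assume "infinite S"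
    then have "infinite (Pow S)" by simp
    then show False using nz unfolding mult_formula[OF g] by simp
  qed
  from nz obtain T where T: "T \<in> Pow S" "wsign T (S - T) * mm (sq N) (blkf w T) (blkf v (S - T)) (r,i) (c,j) \<noteq> 0"
    unfolding mult_formula[OF g] by (meson sum.not_neutral_contains_not_neutral)
  then have "mm (sq N) (blkf w T) (blkf v (S - T)) (r,i) (c,j) \<noteq> 0" by auto
  then obtain p where p: "p \<in> sq N" "blkf w T (r,i) p * blkf v (S - T) p (c,j) \<noteq> 0"
    unfolding mm_def by (meson sum.not_neutral_contains_not_neutral)
  obtain k l where "p = (k,l)" by fastforce
  have "T \<subseteq> S \<and> k < N \<and> l < N \<and> w r k T i l \<noteq> 0 \<and> v k c (S - T) l j \<noteq> 0"
    using p T \<open>p = (k,l)\<close> by (auto simp: blkf_def)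
  with fin show ?thesis by blast
qed

lemma good_mult: assumes "good N w" "good N v" shows "good N (om_mult w v)"
proof -
  have w1: "\<And>r c S. w r c S \<noteq> mzero \<Longrightarrow> r < N" and w2: "\<And>r c S i j. r \<le> i \<Longrightarrow> w r c S i j = 0"
    using assms(1) unfolding good_def by auto
  have v1: "\<And>r c S. v r c S \<noteq> mzero \<Longrightarrow> c < N" and v2: "\<And>r c S i j. c \<le> j \<Longrightarrow> v r c S i j = 0"
    using assms(2) unfolding good_def by auto
  have A: "r < N \<and> c < N" if "om_mult w v r c S \<noteq> mzero" for r c S
  proof -
    from that obtain i j where "om_mult w v r c S i j \<noteq> 0" unfolding mzero_def by meson
    from mult_nz[OF assms(1) this] obtain T k l where "w r k T i l \<noteq> 0" "v k c (S - T) l j \<noteq> 0" by blast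
    then have "w r k T \<noteq> mzero" "v k c (S - T) \<noteq> mzero" unfolding mzero_def by metis+
    then show ?thesis using w1 v1 by blast
  qed
  have B: "om_mult w v r c S i j = 0" if "r \<le> i \<or> c \<le> j" for r c S i j
  proof (rule ccontr)
    assume "om_mult w v r c S i j \<noteq> 0"
    from mult_nz[OF assms(1) this] obtain T k l where "w r k T i l \<noteq> 0" "v k c (S - T) l j \<noteq> 0" by blast
    then show False using that w2 v2 by blast
  qed
  show ?thesis using A B unfolding good_def by blast
qed

definition wcount :: "nat set \<Rightarrow> nat set \<Rightarrow> nat" where
  "wcount X Y = card {(t, u). t \<in> X \<and> u \<in> Y \<and> u < t}"

lemma wsign_inv: "wsign X Y = (-1) ^ wcount X Y" unfolding wsign_def wcount_def by simp

lemma inv_Un_left: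
  assumes "finite X" "finite Y" "finite Z" "X \<inter> Y = {}"
  shows "wcount (X \<union> Y) Z = wcount X Z + wcount Y Z"
proof -
  have e: "{(t, u). t \<in> X \<union> Y \<and> u \<in> Z \<and> u < t} = {(t, u). t \<in> X \<and> u \<in> Z \<and> u < t} \<union> {(t, u). t \<in> Y \<and> u \<in> Z \<and> u < t}"
    by auto
  have f1: "finite {(t, u). t \<in> X \<and> u \<in> Z \<and> u < t}"
    by (rule finite_subset[of _ "X \<times> Z"]) (use assms in auto)
  have f2: "finite {(t, u). t \<in> Y \<and> u \<in> Z \<and> u < t}"
    by (rule finite_subset[of _ "Y \<times> Z"]) (use assms in auto)
  show ?thesis unfolding wcount_def e by (rule card_Un_disjoint[OF f1 f2]) (use assms in auto)
qed

lemma inv_Un_right: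
  assumes "finite X" "finite Y" "finite Z" "Y \<inter> Z = {}"
  shows "wcount X (Y \<union> Z) = wcount X Y + wcount X Z"
proof -
  have e: "{(t, u). t \<in> X \<and> u \<in> Y \<union> Z \<and> u < t} = {(t, u). t \<in> X \<and> u \<in> Y \<and> u < t} \<union> {(t, u). t \<in> X \<and> u \<in> Z \<and> u < t}"
    by auto
  have f1: "finite {(t, u). t \<in> X \<and> u \<in> Y \<and> u < t}"
    by (rule finite_subset[of _ "X \<times> Y"]) (use assms in auto)
  have f2: "finite {(t, u). t \<in> X \<and> u \<in> Z \<and> u < t}"
    by (rule finite_subset[of _ "X \<times> Z"]) (use assms in auto)
  show ?thesis unfolding wcount_def e by (rule card_Un_disjoint[OF f1 f2]) (use assms in auto)
qed

lemma sign_assoc: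
  assumes "finite S" "A \<subseteq> S" "B \<subseteq> S - A"
  shows "wsign (A \<union> B) (S - A - B) * wsign A B = wsign A (S - A) * (wsign B (S - A - B) :: 'b::ring_1)"
proof -
  have fin: "finite A" "finite B" "finite (S - A - B)"
    using assms(1,2) finite_subset apply blast
    using assms(1,3) finite_subset[of B S] apply blast
    using assms(1) by blast
  have "S - A = B \<union> (S - A - B)" using assms by auto
  then have 1: "wcount A (S - A) = wcount A B + wcount A (S - A - B)"
    using inv_Un_right[OF fin] by auto
  have 2: "wcount (A \<union> B) (S - A - B) = wcount A (S - A - B) + wcount B (S - A - B)"
    using inv_Un_left[OF fin] assms by auto
  show ?thesis unfolding wsign_inv power_add[symmetric] 1 2 by (simp add: ac_simps)
qed

lemma pow_reindex:
  assumes "finite S"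
  shows "(\<Sum>T\<in>Pow S. \<Sum>T'\<in>Pow T. g T T') = (\<Sum>A\<in>Pow S. \<Sum>B\<in>Pow (S - A). (g (A \<union> B) A :: 'b::comm_monoid_add))"
proof -
  have fT: "\<forall>T\<in>Pow S. finite (Pow T)" using assms finite_subset by auto
  have fA: "\<forall>A\<in>Pow S. finite (Pow (S - A))" using assms by auto
  have "(\<Sum>T\<in>Pow S. \<Sum>T'\<in>Pow T. g T T') = (\<Sum>(T,T')\<in>(SIGMA T:Pow S. Pow T). g T T')"
    by (rule sum.Sigma) (use assms fT in auto)
  also have "\<dots> = (\<Sum>(A,B)\<in>(SIGMA A:Pow S. Pow (S - A)). g (A \<union> B) A)"
    by (rule sum.reindex_bij_witness[where i = "\<lambda>(A,B). (A \<union> B, A)" and j = "\<lambda>(T,T'). (T', T - T')"])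
       (auto simp: Un_absorb1)
  also have "\<dots> = (\<Sum>A\<in>Pow S. \<Sum>B\<in>Pow (S - A). g (A \<union> B) A)"
    by (rule sum.Sigma[symmetric]) (use assms fA in auto)
  finally show ?thesis .
qed


lemma blkf_mult:
  assumes g: "good N w"
  shows "blkf (om_mult w v) T = (\<lambda>x p. \<Sum>T'\<in>Pow T. wsign T' (T - T') * mm (sq N) (blkf w T') (blkf v (T - T')) x p)"
proof (intro ext)
  fix x p :: "nat \<times> nat"
  obtain a b where x: "x = (a,b)" by fastforce
  obtain k l where p: "p = (k,l)" by fastforce
  show "blkf (om_mult w v) T x p = (\<Sum>T'\<in>Pow T. wsign T' (T - T') * mm (sq N) (blkf w T') (blkf v (T - T')) x p)"
    unfolding x p by (simp add: blkf_def mult_formula[OF g])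
qed

lemma mult_assoc_good:
  fixes w v u :: "'b::ring_1 om"
  assumes gw: "good N w" and gv: "good N v" and gu: "good N u"
  shows "om_mult (om_mult w v) u = om_mult w (om_mult v u)"
proof (intro ext)
  fix r c S i j
  have gwv: "good N (om_mult w v)" by (rule good_mult[OF gw gv])
  show "om_mult (om_mult w v) u r c S i j = om_mult w (om_mult v u) r c S i j"
  proof (cases "finite S")
    case False
    then have "infinite (Pow S)" by simp
    then show ?thesis unfolding mult_formula[OF gwv] mult_formula[OF gw] by simp
  next
    case True
    let ?F = "\<lambda>A B C. mm (sq N) (blkf w A) (mm (sq N) (blkf v B) (blkf u C)) (r,i) (c,j)"
    have "om_mult (om_mult w v) u r c S i j =
       (\<Sum>T\<in>Pow S. wsign T (S - T) * (\<Sum>T'\<in>Pow T. wsign T' (T - T') *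
            mm (sq N) (mm (sq N) (blkf w T') (blkf v (T - T'))) (blkf u (S - T)) (r,i) (c,j)))"
      unfolding mult_formula[OF gwv] blkf_mult[OF gw] mm_sum_left ..
    also have "\<dots> = (\<Sum>T\<in>Pow S. \<Sum>T'\<in>Pow T. wsign T (S - T) * wsign T' (T - T') * ?F T' (T - T') (S - T))"
      by (simp add: sum_distrib_left mult.assoc mm_assoc)
    also have "\<dots> = (\<Sum>A\<in>Pow S. \<Sum>B\<in>Pow (S - A). wsign (A \<union> B) (S - (A \<union> B)) * wsign A (A \<union> B - A) * ?F A (A \<union> B - A) (S - (A \<union> B)))"
      by (rule pow_reindex[OF True])
    also have "\<dots> = (\<Sum>A\<in>Pow S. \<Sum>B\<in>Pow (S - A). wsign A (S - A) * wsign B (S - A - B) * ?F A B (S - A - B))"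
    proof (intro sum.cong refl)
      fix A B assume A: "A \<in> Pow S" and B: "B \<in> Pow (S - A)"
      have e1: "A \<union> B - A = B" using B by auto
      have e2: "S - (A \<union> B) = S - A - B" by auto
      show "wsign (A \<union> B) (S - (A \<union> B)) * wsign A (A \<union> B - A) * ?F A (A \<union> B - A) (S - (A \<union> B)) =
            wsign A (S - A) * wsign B (S - A - B) * ?F A B (S - A - B)"
      proof -
        have sa: "wsign (A \<union> B) (S - A - B) * wsign A B = wsign A (S - A) * (wsign B (S - A - B) :: 'b)"
          using sign_assoc[OF True] A B by auto
        show ?thesis unfolding e1 e2 sa ..
      qed
    qed
    also have "\<dots> = om_mult w (om_mult v u) r c S i j"
      unfolding mult_formula[OF gw] blkf_mult[OF gv] mm_sum_right
      by (simp add: sum_distrib_left mult.assoc)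
    finally show ?thesis .
  qed
qed



lemma good_zero: "good N om_zero" unfolding good_def om_zero_def mzero_def by simp

lemma wf_good: assumes "om_wf n0 w" shows "\<exists>N. good N w"
proof -
  let ?F = "{(r, c, S). w r c S \<noteq> mzero}"
  have fin: "finite ?F" using assms unfolding om_wf_def by blast
  let ?M = "fst ` ?F \<union> (fst \<circ> snd) ` ?F"
  have fM: "finite ?M" using fin by simp
  have a1: "r < Suc (Max ?M) \<and> c < Suc (Max ?M)" if "w r c S \<noteq> mzero" for r c S
  proof -
    from that have "(r,c,S) \<in> ?F" by simp
    then have "r \<in> ?M" "c \<in> ?M" by force+
    then show "r < Suc (Max ?M) \<and> c < Suc (Max ?M)" using fM by (simp add: le_imp_less_Suc)
  qed
  have a2: "w r c S i j = 0" if "r \<le> i \<or> c \<le> j" for r c S i j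
    using assms that unfolding om_wf_def by blast
  have "good (Suc (Max ?M)) w" unfolding good_def using a1 a2 by blast
  then show ?thesis ..
qed

lemma wf_good2: assumes "om_wf n0 w" "om_wf n0 v" obtains N where "good N w" "good N v"
proof -
  obtain N1 N2 where "good N1 w" "good N2 v" using wf_good assms by metis
  then show ?thesis using that good_mono[of N1 w "max N1 N2"] good_mono[of N2 v "max N1 N2"] by auto
qed

lemma wf_good3: assumes "om_wf n0 w" "om_wf n0 v" "om_wf n0 u" obtains N where "good N w" "good N v" "good N u"
proof -
  obtain N1 N2 N3 where "good N1 w" "good N2 v" "good N3 u" using wf_good assms by metis
  then show ?thesis using that good_mono[of N1 w "max N1 (max N2 N3)"] good_mono[of N2 v "max N1 (max N2 N3)"]
      good_mono[of N3 u "max N1 (max N2 N3)"] by auto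
qed

lemma om_assoc:
  fixes a b c :: "'b::ring_1 om"
  assumes "om_wf n0 a" "om_wf n0 b" "om_wf n0 c"
  shows "om_mult (om_mult a b) c = om_mult a (om_mult b c)"
proof -
  obtain N where "good N a" "good N b" "good N c" using wf_good3[OF assms] .
  then show ?thesis by (rule mult_assoc_good)
qed

lemma wf_mult:
  fixes w v :: "'b::ring_1 om"
  assumes "om_wf n0 w" "om_wf n0 v" shows "om_wf n0 (om_mult w v)"
proof -
  obtain N where gw: "good N w" and gv: "good N v" using wf_good2[OF assms] .
  have g: "good N (om_mult w v)" by (rule good_mult[OF gw gv])
  have A: "n0 \<le> r \<and> n0 \<le> c \<and> S \<subseteq> {0,1} \<and> r < N \<and> c < N" if "om_mult w v r c S \<noteq> mzero" for r c S
  proof -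
    from that obtain i j where "om_mult w v r c S i j \<noteq> 0" unfolding mzero_def by meson
    from mult_nz[OF gw this] obtain T k l where T: "T \<subseteq> S" "w r k T i l \<noteq> 0" "v k c (S - T) l j \<noteq> 0" by blast
    then have "w r k T \<noteq> mzero" "v k c (S - T) \<noteq> mzero" unfolding mzero_def by metis+
    then have "n0 \<le> r" "T \<subseteq> {0,1}" "n0 \<le> c" "S - T \<subseteq> {0,1}" using assms unfolding om_wf_def by blast+
    moreover have "r < N \<and> c < N" using g that unfolding good_def by blast
    ultimately show ?thesis using T by blast
  qed
  have "{(r, c, S). om_mult w v r c S \<noteq> mzero} \<subseteq> {..<N} \<times> {..<N} \<times> Pow {0,1}"
    using A by auto
  then have fin: "finite {(r, c, S). om_mult w v r c S \<noteq> mzero}"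
    by (rule finite_subset) auto
  show ?thesis unfolding om_wf_def using fin A g unfolding good_def by blast
qed

lemma wf_blk: "n0 \<le> a \<Longrightarrow> n0 \<le> b \<Longrightarrow> om_wf n0 (blk a b M)"
proof -
  assume ab: "n0 \<le> a" "n0 \<le> b"
  have "{(r, c, S). blk a b M r c S \<noteq> mzero} \<subseteq> {(a,b,{})}" unfolding blk_def by auto
  then have "finite {(r, c, S). blk a b M r c S \<noteq> mzero}" by (rule finite_subset) auto
  then show ?thesis unfolding om_wf_def using ab by (auto simp: blk_def mzero_def split: if_splits)
qed

lemma wf_add: "om_wf n0 w \<Longrightarrow> om_wf n0 v \<Longrightarrow> om_wf n0 (om_add w v)"
proof -
  assume w: "om_wf n0 w" and v: "om_wf n0 v"
  have nz: "w r c S \<noteq> mzero \<or> v r c S \<noteq> mzero" if "om_add w v r c S \<noteq> mzero" for r c S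
  proof (rule ccontr)
    assume "\<not> (w r c S \<noteq> mzero \<or> v r c S \<noteq> mzero)"
    then have "w r c S = mzero" "v r c S = mzero" by auto
    then show False using that by (simp add: om_add_def mzero_def)
  qed
  have s: "{(r, c, S). om_add w v r c S \<noteq> mzero} \<subseteq> {(r, c, S). w r c S \<noteq> mzero} \<union> {(r, c, S). v r c S \<noteq> mzero}"
    using nz by blast
  have "finite {(r, c, S). om_add w v r c S \<noteq> mzero}"
    by (rule finite_subset[OF s]) (use w v in \<open>auto simp: om_wf_def\<close>)
  moreover note nz
  moreover have "n0 \<le> r \<and> n0 \<le> c \<and> S \<subseteq> {0, 1}" if "om_add w v r c S \<noteq> mzero" for r c S
    using calculation(2)[OF that] w v unfolding om_wf_def by blast
  moreover have "om_add w v r c S i j = 0" if "r \<le> i \<or> c \<le> j" for r c S i j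
    using that w v unfolding om_wf_def om_add_def by auto
  ultimately show ?thesis unfolding om_wf_def by blast
qed

lemma wf_uminus: "om_wf n0 w \<Longrightarrow> om_wf n0 (om_uminus w)"
proof -
  assume w: "om_wf n0 w"
  have e: "om_uminus w r c S = mzero \<longleftrightarrow> w r c S = mzero" for r c S
    by (auto simp: om_uminus_def mzero_def fun_eq_iff)
  show ?thesis using w unfolding om_wf_def e by (simp add: om_uminus_def)
qed

lemma wf_zero: "om_wf n0 om_zero"
  unfolding om_wf_def om_zero_def mzero_def by (auto intro: finite_subset[of _ "{}"])



lemma om_add_comm: "om_add a b = om_add b a" unfolding om_add_def by (simp add: add.commute)
lemma om_add_assoc: "om_add (om_add a b) c = om_add a (om_add b c)" unfolding om_add_def by (simp add: add.assoc)
lemma om_add_left_comm: "om_add a (om_add b c) = om_add b (om_add a c)" unfolding om_add_def by (simp add: add.left_commute)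
lemma om_add_zero_right[simp]: "om_add a om_zero = a" unfolding om_add_def om_zero_def mzero_def by simp
lemma om_add_zero_left[simp]: "om_add om_zero a = a" unfolding om_add_def om_zero_def mzero_def by simp
lemma om_uminus_add[simp]: "om_uminus (om_add a b) = om_add (om_uminus a) (om_uminus b)"
  unfolding om_add_def om_uminus_def by (simp add: add.commute)
lemma om_uminus_uminus[simp]: "om_uminus (om_uminus a) = a" unfolding om_uminus_def by simp
lemma om_uminus_zero[simp]: "om_uminus om_zero = om_zero" unfolding om_uminus_def om_zero_def mzero_def by simp
lemma om_diff_eq: "om_diff a b = om_add a (om_uminus b)" unfolding om_diff_def om_add_def om_uminus_def by simp

lemma om_mult_zero_left[simp]: "om_mult om_zero w = om_zero"
  unfolding om_mult_def om_zero_def mzero_def by simp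
lemma om_mult_zero_right[simp]: "om_mult w om_zero = om_zero"
  unfolding om_mult_def om_zero_def mzero_def by simp

lemma om_mult_add_right: "om_mult w (om_add v u) = om_add (om_mult w v) (om_mult w u)"
  unfolding om_mult_def om_add_def by (simp add: distrib_left sum.distrib)

lemma om_mult_uminus_right: "om_mult w (om_uminus v) = om_uminus (om_mult w v)"
  unfolding om_mult_def om_uminus_def by (simp add: sum_negf)

lemma om_mult_add_left:
  assumes "om_wf n0 a" "om_wf n0 b"
  shows "om_mult (om_add a b) c = om_add (om_mult a c) (om_mult b c)"
proof -
  obtain N where ga: "good N a" and gb: "good N b" and gab: "good N (om_add a b)"
    using wf_good3[OF assms wf_add[OF assms]] .
  have pw: "om_mult (om_add a b) c r c' S i j = om_mult a c r c' S i j + om_mult b c r c' S i j" for r c' S i j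
    unfolding mult_formula[OF ga] mult_formula[OF gb] mult_formula[OF gab]
    by (simp add: om_add_def mm_def blkf_def case_prod_beta distrib_right distrib_left sum.distrib)
  show ?thesis by (intro ext) (subst pw, simp add: om_add_def)
qed

lemma om_mult_uminus_left:
  assumes "om_wf n0 a"
  shows "om_mult (om_uminus a) c = om_uminus (om_mult a c)"
proof -
  obtain N where ga: "good N a" and gab: "good N (om_uminus a)"
    using wf_good2[OF assms wf_uminus[OF assms]] .
  have pw: "om_mult (om_uminus a) c r c' S i j = - om_mult a c r c' S i j" for r c' S i j
    unfolding mult_formula[OF ga] mult_formula[OF gab]
    by (simp add: om_uminus_def mm_def blkf_def case_prod_beta sum_negf)
  show ?thesis by (intro ext) (subst pw, simp add: om_uminus_def)
qed

lemma sum_single: "finite A \<Longrightarrow> x \<in> A \<Longrightarrow> (\<And>y. y \<in> A \<Longrightarrow> y \<noteq> x \<Longrightarrow> f y = 0) \<Longrightarrow> sum f A = f x"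
  by (metis (mono_tags, lifting) sum.remove sum.neutral add.right_neutral DiffE insertCI)

lemma wsign_empty_right[simp]: "wsign S {} = 1" unfolding wsign_def by simp
lemma wsign_empty_left[simp]: "wsign {} S = 1" unfolding wsign_def by simp

lemma good_blk: "a < N \<Longrightarrow> b < N \<Longrightarrow> good N (blk a b M)"
  unfolding good_def blk_def mzero_def by (auto simp: fun_eq_iff)

lemma wf_inf: "om_wf n0 w \<Longrightarrow> infinite S \<Longrightarrow> w r c S i j = 0"
  unfolding om_wf_def mzero_def by (metis finite.emptyI finite_insert finite_subset)

lemma om_mult_unit_right:
  fixes w :: "'b::ring_1 om"
  assumes w: "om_wf n0 w" and ib: "in_block a n w"
  shows "om_mult w (blk n n idm) = w"
proof (intro ext)
  fix r c S i j
  obtain N0 where g0: "good N0 w" using wf_good[OF w] by blast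
  define N where "N = max N0 (Suc n)"
  have g: "good N w" using good_mono[OF g0] N_def by auto
  have nN: "n < N" using N_def by auto
  show "om_mult w (blk n n idm) r c S i j = w r c S i j"
  proof (cases "finite S")
    case False
    then show ?thesis unfolding mult_formula[OF g] using wf_inf[OF w False] by simp
  next
    case True
    have "om_mult w (blk n n idm) r c S i j = wsign S (S - S) * mm (sq N) (blkf w S) (blkf (blk n n idm) (S - S)) (r,i) (c,j)"
      unfolding mult_formula[OF g]
    proof (rule sum_single)
      fix T assume "T \<in> Pow S" "T \<noteq> S"
      then have "S - T \<noteq> {}" by auto
      then show "wsign T (S - T) * mm (sq N) (blkf w T) (blkf (blk n n idm) (S - T)) (r,i) (c,j) = 0"
        by (simp add: mm_def blkf_def blk_def mzero_def case_prod_beta)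
    qed (use True in auto)
    also have "\<dots> = (\<Sum>p\<in>sq N. if p = (n,j) then (if c = n \<and> j < n then w r n S i j else 0) else 0)"
      unfolding mm_def Diff_cancel wsign_empty_right mult_1_left
      by (intro sum.cong refl) (auto simp: blkf_def blk_def idm_def mzero_def case_prod_beta)
    also have "\<dots> = (if c = n \<and> j < n then w r n S i j else 0)"
      using nN by (simp add: sum.delta)
    also have "\<dots> = w r c S i j"
    proof -
      have "c \<noteq> n \<Longrightarrow> w r c S i j = 0" using ib unfolding in_block_def mzero_def by metis
      moreover have "n \<le> j \<Longrightarrow> w r c S i j = 0 \<or> c \<noteq> n" using w unfolding om_wf_def by blast
      ultimately show ?thesis by auto
    qed
    finally show ?thesis .
  qed
qed

lemma om_mult_unit_left:
  fixes w :: "'b::ring_1 om"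
  assumes w: "om_wf n0 w" and ib: "in_block n b w"
  shows "om_mult (blk n n idm) w = w"
proof (intro ext)
  fix r c S i j
  obtain N0 where g0: "good N0 w" using wf_good[OF w] by blast
  define N where "N = max N0 (Suc n)"
  have nN: "n < N" using N_def by auto
  have g: "good N (blk n n idm)" using good_blk nN by blast
  show "om_mult (blk n n idm) w r c S i j = w r c S i j"
  proof (cases "finite S")
    case False
    then show ?thesis unfolding mult_formula[OF g] using wf_inf[OF w False] by simp
  next
    case True
    have "om_mult (blk n n idm) w r c S i j = wsign {} (S - {}) * mm (sq N) (blkf (blk n n idm) {}) (blkf w (S - {})) (r,i) (c,j)"
      unfolding mult_formula[OF g]
    proof (rule sum_single)
      fix T assume "T \<in> Pow S" "T \<noteq> {}"
      then show "wsign T (S - T) * mm (sq N) (blkf (blk n n idm) T) (blkf w (S - T)) (r,i) (c,j) = 0"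
        by (simp add: mm_def blkf_def blk_def mzero_def case_prod_beta)
    qed (use True in auto)
    also have "\<dots> = (\<Sum>p\<in>sq N. if p = (n,i) then (if r = n \<and> i < n then w n c S i j else 0) else 0)"
      unfolding mm_def Diff_empty wsign_empty_left mult_1_left
      by (intro sum.cong refl) (auto simp: blkf_def blk_def idm_def mzero_def case_prod_beta)
    also have "\<dots> = (if r = n \<and> i < n then w n c S i j else 0)"
      using nN by (simp add: sum.delta)
    also have "\<dots> = w r c S i j"
    proof -
      have "r \<noteq> n \<Longrightarrow> w r c S i j = 0" using ib unfolding in_block_def mzero_def by metis
      moreover have "n \<le> i \<Longrightarrow> w r c S i j = 0 \<or> r \<noteq> n" using w unfolding om_wf_def by blast
      ultimately show ?thesis by auto
    qed
    finally show ?thesis .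
  qed
qed

lemma hom_mult:
  fixes w v :: "'b::ring_1 om"
  assumes "om_wf n0 w" "om_hom k w" "om_hom k' v"
  shows "om_hom (k + k') (om_mult w v)"
  unfolding om_hom_def
proof (intro allI impI)
  fix r c S assume "om_mult w v r c S \<noteq> mzero"
  then obtain i j where nz: "om_mult w v r c S i j \<noteq> 0" unfolding mzero_def by meson
  obtain N where g: "good N w" using wf_good[OF assms(1)] by blast
  from mult_nz[OF g nz] obtain T k1 l where T: "finite S" "T \<subseteq> S" "w r k1 T i l \<noteq> 0" "v k1 c (S - T) l j \<noteq> 0" by blast
  then have "w r k1 T \<noteq> mzero" "v k1 c (S - T) \<noteq> mzero" unfolding mzero_def by metis+
  then have "card T = k" "card (S - T) = k'" using assms unfolding om_hom_def by blast+
  moreover have "card S = card T + card (S - T)"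
    using T by (metis card_Diff_subset card_mono finite_subset le_add_diff_inverse)
  ultimately show "card S = k + k'" by simp
qed

lemma hom_blk: "om_hom 0 (blk a b M)" unfolding om_hom_def blk_def by auto
lemma hom_zero: "om_hom k om_zero" unfolding om_hom_def om_zero_def by auto

lemma in_block_blk: "in_block a b (blk a b M)" unfolding in_block_def blk_def by auto



lemma sc_zero: "complex_algebra sc \<Longrightarrow> sc z (0::'b::ring_1) = 0"
proof -
  assume a: "complex_algebra sc"
  have "sc z (0 + 0) = sc z 0 + sc z (0::'b)" using a unfolding complex_algebra_def by blast
  then show ?thesis by simp
qed

lemma sc_neg1: "complex_algebra sc \<Longrightarrow> sc (-1) (x::'b::ring_1) = - x"
proof -
  assume a: "complex_algebra sc"
  have z: "sc 0 x = 0"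
  proof -
    have "sc (0 + 0) x = sc 0 x + sc 0 x" using a unfolding complex_algebra_def by blast
    then show ?thesis by simp
  qed
  have "sc (1 + -1) x = sc 1 x + sc (-1) x" using a unfolding complex_algebra_def by blast
  then have "0 = x + sc (-1) x" using a z unfolding complex_algebra_def by simp
  then have "- x = - x + (x + sc (-1) x)" by simp
  then show ?thesis by simp
qed

lemma scale_one: "complex_algebra sc \<Longrightarrow> om_scale sc 1 w = w"
  unfolding om_scale_def complex_algebra_def by simp

lemma scale_neg1: "complex_algebra sc \<Longrightarrow> om_scale sc (-1) w = om_uminus w"
  unfolding om_scale_def om_uminus_def by (simp add: sc_neg1)

context
  fixes sc :: "complex \<Rightarrow> 'b::ring_1 \<Rightarrow> 'b" and n0 :: nat and D :: "'b om \<Rightarrow> 'b om"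
  assumes alg: "complex_algebra sc" and gd: "graded_differential sc n0 D"
begin

lemma gdc: "(\<forall>w. om_wf n0 w \<longrightarrow> om_wf n0 (D w)) \<and>
     (\<forall>w v. om_wf n0 w \<longrightarrow> om_wf n0 v \<longrightarrow> D (om_add w v) = om_add (D w) (D v)) \<and>
     (\<forall>z w. om_wf n0 w \<longrightarrow> D (om_scale sc z w) = om_scale sc z (D w)) \<and>
     (\<forall>k w. om_wf n0 w \<longrightarrow> om_hom k w \<longrightarrow> om_hom (Suc k) (D w)) \<and>
     (\<forall>w. om_wf n0 w \<longrightarrow> D (D w) = om_zero) \<and>
     (\<forall>k w v. om_wf n0 w \<longrightarrow> om_wf n0 v \<longrightarrow> om_hom k w \<longrightarrow>
        D (om_mult w v) = om_add (om_mult (D w) v) (om_scale sc ((-1) ^ k) (om_mult w (D v)))) \<and>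
     (\<forall>w R. om_wf n0 w \<longrightarrow> R \<subseteq> {0, 1} \<longrightarrow> D (om_rwedge w R) = om_rwedge (D w) R)"
  using gd unfolding graded_differential_def .

lemma D_wf: "om_wf n0 w \<Longrightarrow> om_wf n0 (D w)"
  using gdc by simp

lemma D_add: "om_wf n0 w \<Longrightarrow> om_wf n0 v \<Longrightarrow> D (om_add w v) = om_add (D w) (D v)"
  using gdc by simp

lemma D_scale: "om_wf n0 w \<Longrightarrow> D (om_scale sc z w) = om_scale sc z (D w)"
  using gdc by simp

lemma D_uminus: "om_wf n0 w \<Longrightarrow> D (om_uminus w) = om_uminus (D w)"
  using D_scale[of w "-1"] scale_neg1[OF alg] by simp

lemma D_dd: "om_wf n0 w \<Longrightarrow> D (D w) = om_zero"
  using gdc by simp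

lemma D_hom: "om_wf n0 w \<Longrightarrow> om_hom k w \<Longrightarrow> om_hom (Suc k) (D w)"
  using gdc by simp

lemma D_leib: "om_wf n0 a \<Longrightarrow> om_wf n0 b \<Longrightarrow> om_hom k a \<Longrightarrow>
   D (om_mult a b) = om_add (om_mult (D a) b) (om_scale sc ((-1) ^ k) (om_mult a (D b)))"
  using gdc by simp

lemma D_leib0: "om_hom 0 a \<Longrightarrow> om_wf n0 a \<Longrightarrow> om_wf n0 b \<Longrightarrow> D (om_mult a b) = om_add (om_mult (D a) b) (om_mult a (D b))"
proof -
  assume "om_hom 0 a" "om_wf n0 a" "om_wf n0 b"
  then have "D (om_mult a b) = om_add (om_mult (D a) b) (om_scale sc ((-1) ^ 0) (om_mult a (D b)))"
    using D_leib by simp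
  then show ?thesis using scale_one[OF alg] by simp
qed

lemma D_leib1: "om_hom 1 a \<Longrightarrow> om_wf n0 a \<Longrightarrow> om_wf n0 b \<Longrightarrow> D (om_mult a b) = om_add (om_mult (D a) b) (om_uminus (om_mult a (D b)))"
proof -
  assume "om_hom 1 a" "om_wf n0 a" "om_wf n0 b"
  then have "D (om_mult a b) = om_add (om_mult (D a) b) (om_scale sc ((-1) ^ 1) (om_mult a (D b)))"
    using D_leib by simp
  then show ?thesis using scale_neg1[OF alg] by simp
qed

lemma D_unit:
  assumes rs: "respects_sizes n0 D" and n: "n0 \<le> n"
  shows "D (blk n n idm) = om_zero"
proof -
  let ?I = "blk n n idm :: 'b om"
  have wI: "om_wf n0 ?I" using wf_blk n by blast
  have bI: "in_block n n (D ?I)" using rs wI in_block_blk unfolding respects_sizes_def by blast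
  have wDI: "om_wf n0 (D ?I)" using D_wf wI by blast
  have "D ?I = D (om_mult ?I ?I)" using om_mult_unit_right[OF wI in_block_blk] by simp
  also have "\<dots> = om_add (D ?I) (D ?I)"
    using D_leib0[OF hom_blk wI wI] om_mult_unit_right[OF wDI bI] om_mult_unit_left[OF wDI bI] by simp
  finally have e: "D ?I = om_add (D ?I) (D ?I)" .
  show ?thesis
  proof (intro ext)
    fix r c S i j
    have "D ?I r c S i j = D ?I r c S i j + D ?I r c S i j" using e unfolding om_add_def by metis
    then show "D ?I r c S i j = om_zero r c S i j" unfolding om_zero_def mzero_def
      by (metis add_cancel_right_right)
  qed
qed

lemma D_inv:
  assumes rs: "respects_sizes n0 D" and n: "n0 \<le> n"
    and inv1: "om_mult (blk n n X) (blk n n Xi) = blk n n idm"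
    and inv2: "om_mult (blk n n Xi) (blk n n X) = blk n n idm"
  shows "D (blk n n Xi) = om_uminus (om_mult (blk n n Xi) (om_mult (D (blk n n X)) (blk n n Xi)))"
proof -
  let ?x = "blk n n X :: 'b om" and ?xi = "blk n n Xi :: 'b om"
  have wx: "om_wf n0 ?x" and wxi: "om_wf n0 ?xi" using wf_blk n by blast+
  have wdx: "om_wf n0 (D ?x)" and wdxi: "om_wf n0 (D ?xi)" using D_wf wx wxi by blast+
  have bdxi: "in_block n n (D ?xi)" using rs wxi in_block_blk unfolding respects_sizes_def by blast
  have "om_zero = D (om_mult ?x ?xi)" using D_unit[OF rs n] inv1 by simp
  also have "\<dots> = om_add (om_mult (D ?x) ?xi) (om_mult ?x (D ?xi))" by (rule D_leib0[OF hom_blk wx wxi])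
  finally have "om_mult ?xi om_zero = om_mult ?xi (om_add (om_mult (D ?x) ?xi) (om_mult ?x (D ?xi)))" by simp
  also have "\<dots> = om_add (om_mult ?xi (om_mult (D ?x) ?xi)) (om_mult (om_mult ?xi ?x) (D ?xi))"
    by (simp add: om_mult_add_right om_assoc[OF wxi wx wdxi])
  also have "\<dots> = om_add (om_mult ?xi (om_mult (D ?x) ?xi)) (D ?xi)"
    unfolding inv2 om_mult_unit_left[OF wdxi bdxi] ..
  finally have e: "om_zero = om_add (om_mult ?xi (om_mult (D ?x) ?xi)) (D ?xi)" by simp
  show ?thesis
  proof (intro ext)
    fix r c S i j
    have "0 = om_mult ?xi (om_mult (D ?x) ?xi) r c S i j + D ?xi r c S i j"
      using e unfolding om_add_def om_zero_def mzero_def by metis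
    then show "D ?xi r c S i j = om_uminus (om_mult ?xi (om_mult (D ?x) ?xi)) r c S i j"
      unfolding om_uminus_def by (metis add_eq_0_iff2 add_minus_cancel)
  qed
qed

end



theorem theorem2p3:
  fixes sc :: "complex \<Rightarrow> 'b::ring_1 \<Rightarrow> 'b"
    and n0 n n' m m' :: nat
    and d db :: "'b om \<Rightarrow> 'b om"
    and X Xi Y P R U V Q :: "'b mat"
  assumes alg: "complex_algebra sc"
    and bd: "bidifferential sc n0 d db"
    and rs_d: "respects_sizes n0 d" and rs_db: "respects_sizes n0 db"
    and sizes: "n0 \<le> n" "n0 \<le> n'" "n0 \<le> m" "n0 \<le> m'"
    and hX: "db (blk n n X) = om_mult (d (blk n n X)) (blk n n P)"
    and hY: "db (blk n' n Y) = om_mult (d (blk n' n Y)) (blk n n P)"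
    and hRX: "om_diff (om_mult (blk n n R) (blk n n X)) (om_mult (blk n n X) (blk n n P))
              = om_uminus (om_mult (om_mult (om_mult (blk n m V) (blk m m' Q)) (blk m' n' U)) (blk n' n Y))"
    and cP: "d (blk n n P) = om_zero" "db (blk n n P) = om_zero"
    and cR: "d (blk n n R) = om_zero" "db (blk n n R) = om_zero"
    and cU: "d (blk m' n' U) = om_zero" "db (blk m' n' U) = om_zero"
    and cV: "d (blk n m V) = om_zero" "db (blk n m V) = om_zero"
    and cQ: "d (blk m m' Q) = om_zero" "db (blk m m' Q) = om_zero"
    and inv: "om_mult (blk n n X) (blk n n Xi) = blk n n idm"
             "om_mult (blk n n Xi) (blk n n X) = blk n n idm"
  shows "let \<phi> = om_mult (om_mult (om_mult (blk m' n' U) (blk n' n Y)) (blk n n Xi)) (blk n m V);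
             \<theta> = om_mult (om_mult (om_mult (om_mult (blk m' n' U) (blk n' n Y)) (blk n n Xi)) (blk n n R)) (blk n m V)
         in db \<phi> = om_add (om_mult (om_mult (d \<phi>) (blk m m' Q)) \<phi>) (d \<theta>)
            \<and> db (d \<phi>) = om_mult (om_mult (d \<phi>) (blk m m' Q)) (d \<phi>)"
proof -
  have gdd: "graded_differential sc n0 d" and gdb: "graded_differential sc n0 db"
    and anti: "\<And>w. om_wf n0 w \<Longrightarrow> om_add (d (db w)) (db (d w)) = om_zero"
    using bd unfolding bidifferential_def by blast+
  define x where "x = blk n n X"
  define xi where "xi = blk n n Xi"
  define y where "y = blk n' n Y"
  define p where "p = blk n n P"
  define r where "r = blk n n R"
  define u where "u = blk m' n' U"
  define v where "v = blk n m V"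
  define q where "q = blk m m' Q"
  define I where "I = (blk n n idm :: 'b om)"
  have wf: "om_wf n0 x" "om_wf n0 xi" "om_wf n0 y" "om_wf n0 p" "om_wf n0 r" "om_wf n0 u" "om_wf n0 v" "om_wf n0 q"
    unfolding x_def xi_def y_def p_def r_def u_def v_def q_def using wf_blk sizes by blast+
  have hom: "om_hom 0 x" "om_hom 0 xi" "om_hom 0 y" "om_hom 0 p" "om_hom 0 r" "om_hom 0 u" "om_hom 0 v" "om_hom 0 q"
    unfolding x_def xi_def y_def p_def r_def u_def v_def q_def using hom_blk by blast+
  have wfd: "\<And>w. om_wf n0 w \<Longrightarrow> om_wf n0 (d w)" "\<And>w. om_wf n0 w \<Longrightarrow> om_wf n0 (db w)"
    using D_wf[OF alg gdd] D_wf[OF alg gdb] by blast+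
  have dxi: "d xi = om_uminus (om_mult xi (om_mult (d x) xi))"
    unfolding x_def xi_def by (rule D_inv[OF alg gdd rs_d sizes(1) inv])
  have dbxi: "db xi = om_uminus (om_mult xi (om_mult (db x) xi))"
    unfolding x_def xi_def by (rule D_inv[OF alg gdb rs_db sizes(1) inv])
  note assoc = om_assoc[of n0]
  note ml = om_mult_add_left[of n0] om_mult_uminus_left[of n0]
  note dl = D_leib0[OF alg gdd] D_leib0[OF alg gdb] D_add[OF alg gdd] D_add[OF alg gdb]
      D_uminus[OF alg gdd] D_uminus[OF alg gdb]
  note wfc = wf_mult wf_add wf_uminus wf_zero
  note addac = om_add_assoc om_add_comm om_add_left_comm
  have cs: "d u = om_zero" "db u = om_zero" "d v = om_zero" "db v = om_zero" "d q = om_zero" "db q = om_zero"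
     "d r = om_zero" "db r = om_zero" "d p = om_zero" "db p = om_zero"
    using cP cR cU cV cQ unfolding u_def v_def q_def r_def p_def by blast+
  have hX': "db x = om_mult (d x) p" and hY': "db y = om_mult (d y) p"
    using hX hY unfolding x_def y_def p_def .
  have xp: "om_mult x p = om_add (om_mult r x) (om_mult (om_mult (om_mult v q) u) y)"
  proof (intro ext)
    fix a b S i j
    have e: "om_diff (om_mult r x) (om_mult x p) = om_uminus (om_mult (om_mult (om_mult v q) u) y)"
      using hRX unfolding x_def p_def r_def v_def q_def u_def y_def .
    let ?A = "om_mult r x a b S i j" and ?B = "om_mult x p a b S i j"
      and ?C = "om_mult (om_mult (om_mult v q) u) y a b S i j"
    have h: "?A - ?B = - ?C"
      using fun_cong[OF fun_cong[OF fun_cong[OF fun_cong[OF fun_cong[OF e]]]], of a b S i j]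
      unfolding om_diff_def om_uminus_def .
    have "?B = ?A - (?A - ?B)" by simp
    also have "\<dots> = ?A + ?C" unfolding h by simp
    finally show "om_mult x p a b S i j = om_add (om_mult r x) (om_mult (om_mult (om_mult v q) u) y) a b S i j"
      unfolding om_add_def .
  qed
  have inv1: "om_mult x xi = I" and inv2: "om_mult xi x = I" using inv unfolding x_def xi_def I_def .
  have ur: "om_mult r I = r" unfolding r_def I_def by (rule om_mult_unit_right[OF wf_blk[OF sizes(1) sizes(1)] in_block_blk])
  have ul: "om_mult I p = p" unfolding p_def I_def by (rule om_mult_unit_left[OF wf_blk[OF sizes(1) sizes(1)] in_block_blk])
  have pxi: "om_mult p xi = om_add (om_mult xi r) (om_mult xi (om_mult v (om_mult q (om_mult u (om_mult y xi)))))"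
  proof -
    have "om_mult p xi = om_mult (om_mult (om_mult xi x) p) xi" using inv2 ul by simp
    also have "\<dots> = om_mult xi (om_mult (om_mult x p) xi)" using wf by (simp add: assoc wfc)
    also have "\<dots> = om_add (om_mult xi r) (om_mult xi (om_mult v (om_mult q (om_mult u (om_mult y xi)))))"
      unfolding xp using wf by (simp add: assoc wfc ml om_mult_add_right inv1 ur)
    finally show ?thesis .
  qed
  have pxiZ: "om_mult p (om_mult xi Z) = om_add (om_mult xi (om_mult r Z)) (om_mult xi (om_mult v (om_mult q (om_mult u (om_mult y (om_mult xi Z))))))"
    if "om_wf n0 Z" for Z
  proof -
    have "om_mult p (om_mult xi Z) = om_mult (om_mult p xi) Z" using wf that by (simp add: assoc)
    then show ?thesis unfolding pxi using wf that by (simp add: assoc wfc ml om_mult_add_right)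
  qed
  define \<phi> where "\<phi> = om_mult (om_mult (om_mult u y) xi) v"
  define \<theta> where "\<theta> = om_mult (om_mult (om_mult (om_mult u y) xi) r) v"
  have G1: "db \<phi> = om_add (om_mult (om_mult (d \<phi>) q) \<phi>) (d \<theta>)"
    unfolding \<phi>_def \<theta>_def using wf hom
    apply (simp add: assoc wfc wfd ml om_mult_add_right om_mult_uminus_right dl cs dxi dbxi hX' hY' pxiZ)
    by (simp only: addac)
  have h0: "\<And>a b. om_wf n0 a \<Longrightarrow> om_hom 0 a \<Longrightarrow> om_hom 0 b \<Longrightarrow> om_hom 0 (om_mult a b)"
    using hom_mult[where k=0 and k'=0] by simp
  have wphi: "om_wf n0 \<phi>" and wtheta: "om_wf n0 \<theta>" unfolding \<phi>_def \<theta>_def using wf by (simp_all add: wfc)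
  have hphi: "om_hom 0 \<phi>" unfolding \<phi>_def using wf hom by (simp add: h0 wfc)
  have wdphi: "om_wf n0 (d \<phi>)" using wfd wphi by blast
  have hdphi: "om_hom 1 (d \<phi>)" using D_hom[OF alg gdd wphi hphi] by simp
  have hdq: "om_hom 1 (om_mult (d \<phi>) q)" using hom_mult[OF wdphi hdphi hom(8)] by simp
  have wdq: "om_wf n0 (om_mult (d \<phi>) q)" using wdphi wf by (simp add: wfc)
  have ddq: "d (om_mult (d \<phi>) q) = om_zero"
    using D_leib1[OF alg gdd hdphi wdphi wf(8)] D_dd[OF alg gdd wphi] cs by simp
  have "d (db \<phi>) = om_add (d (om_mult (om_mult (d \<phi>) q) \<phi>)) (d (d \<theta>))"
    unfolding G1 using D_add[OF alg gdd] wdq wphi wtheta wfd by (simp add: wfc)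
  also have "\<dots> = om_uminus (om_mult (om_mult (d \<phi>) q) (d \<phi>))"
    using D_leib1[OF alg gdd hdq wdq wphi] ddq D_dd[OF alg gdd wtheta] by simp
  finally have ddb: "d (db \<phi>) = om_uminus (om_mult (om_mult (d \<phi>) q) (d \<phi>))" .
  have e: "om_add (d (db \<phi>)) (db (d \<phi>)) = om_zero" using anti[OF wphi] .
  have G2: "db (d \<phi>) = om_mult (om_mult (d \<phi>) q) (d \<phi>)"
  proof (intro ext)
    fix a b S i j
    have "0 = d (db \<phi>) a b S i j + db (d \<phi>) a b S i j"
      using e unfolding om_add_def om_zero_def mzero_def by metis
    then have "db (d \<phi>) a b S i j = - d (db \<phi>) a b S i j"
      by (metis add_eq_0_iff2 add_minus_cancel)
    then show "db (d \<phi>) a b S i j = om_mult (om_mult (d \<phi>) q) (d \<phi>) a b S i j"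
      unfolding ddb om_uminus_def by simp
  qed
  show ?thesis
    unfolding Let_def u_def[symmetric] y_def[symmetric] xi_def[symmetric] v_def[symmetric]
      r_def[symmetric] q_def[symmetric] \<phi>_def[symmetric] \<theta>_def[symmetric]
    using G1 G2 by simp
qed

end
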